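(* Let $(\mathcal{G},\mu)$ be an edge partition, $B\subseteq\mathcal{N}$ and $\zeta\in\Theta_\mathcal{G}(B)$. Let \[\mathcal{E}_\zeta=\{E\subseteq\zeta\cap\operatorname{im}\mu : (\zeta\setminus E)\cup\mu^*(E)\in\Theta_\mathcal{G}(B)\}.\] Then $\mathcal{E}_\zeta$ is closed under union: if $E_1,E_2\in\mathcal{E}_\zeta$ then $E_1\cup E_2\in\mathcal{E}_\zeta$.
   Context: $R$ is a partially ordered ring; $\mathcal{G}=(\mathcal{N},\mathcal{E})$ is a multidigraph with source/target maps $s,t\colon\mathcal{E}\to\mathcal{N}$, no self-loops, $\mathcal{N}=\{1,\dots,m+1\}$, labeling $\pi\colon\mathcal{E}\to R$. Trees/forests are subgraphs whose underlying undirected graph is acyclic (connected for trees); a tree is rooted at $N$ if $N$ is its only node without outgoing edges; spanning forests have node set $\mathcal{N}$ and are identified with their edge sets. $\Theta_\mathcal{G}(B)$ is the set of spanning forests with $|B|$ connected components, each a tree rooted at a node of $B$. A cycle is a closed directed path with no repeated nodes. $\mathcal{E}^-=\{e:\pi(e)\in R_{<0}\}$, $\mathcal{E}^+=\{e:\pi(e)\in R_{>0}\}$. A pair $(\mathcal{G},\mu)$ with $\mu\colon\mathcal{E}^-\to\mathcal{P}(\mathcal{E}^+)$ is an edge partition if (i) $\mathcal{E}=\mathcal{E}^+\sqcup\mathcal{E}^-$; (ii) every cycle contains at most one edge of $\mathcal{E}^-$; (iii) for each $e\in\mathcal{E}^-$: (a) $e'\in\mu(e)\Rightarrow s(e')=s(e)$;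 (b) $e'\in\mu(e)\Rightarrow$ every cycle containing $e'$ contains $t(e)$; (c) $\mu(e)\cap\mu(e')=\emptyset$ for $e\neq e'$. $\operatorname{im}\mu=\bigcup_{e\in\mathcal{E}^-}\mu(e)$ and $\mu^*\colon\operatorname{im}\mu\to\mathcal{E}^-$ is given by $\mu^*(e')=e$ if $e'\in\mu(e)$. *)

theory Defs
  imports Main
begin

definition multidigraph :: "nat \<Rightarrow> 'e set \<Rightarrow> ('e \<Rightarrow> nat) \<Rightarrow> ('e \<Rightarrow> nat) \<Rightarrow> bool" where
  "multidigraph m E s t \<longleftrightarrow> finite E \<and>
     (\<forall>e\<in>E. s e \<in> {1..m+1} \<and> t e \<in> {1..m+1} \<and> s e \<noteq> t e)"

definition is_cycle :: "'e set \<Rightarrow> ('e \<Rightarrow> nat) \<Rightarrow> ('e \<Rightarrow> nat) \<Rightarrow> 'e list \<Rightarrow> nat list \<Rightarrow> bool" where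
  "is_cycle E s t es vs \<longleftrightarrow> es \<noteq> [] \<and> length vs = Suc (length es) \<and> set es \<subseteq> E \<and>
     (\<forall>i<length es. s (es!i) = vs!i \<and> t (es!i) = vs!Suc i) \<and>
     vs!0 = vs!length es \<and> distinct (tl vs)"

definition undirected_cycle :: "'e set \<Rightarrow> ('e \<Rightarrow> nat) \<Rightarrow> ('e \<Rightarrow> nat) \<Rightarrow> 'e list \<Rightarrow> nat list \<Rightarrow> bool" where
  "undirected_cycle F s t es vs \<longleftrightarrow> es \<noteq> [] \<and> length vs = Suc (length es) \<and> set es \<subseteq> F \<and>
     distinct es \<and>
     (\<forall>i<length es. (s (es!i) = vs!i \<and> t (es!i) = vs!Suc i) \<or> (t (es!i) = vs!i \<and> s (es!i) = vs!Suc i)) \<and>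
     vs!0 = vs!length es \<and> distinct (tl vs)"

definition undirected_acyclic :: "'e set \<Rightarrow> ('e \<Rightarrow> nat) \<Rightarrow> ('e \<Rightarrow> nat) \<Rightarrow> bool" where
  "undirected_acyclic F s t \<longleftrightarrow> (\<nexists>es vs. undirected_cycle F s t es vs)"

definition adj :: "'e set \<Rightarrow> ('e \<Rightarrow> nat) \<Rightarrow> ('e \<Rightarrow> nat) \<Rightarrow> (nat \<times> nat) set" where
  "adj F s t = {(s e, t e) | e. e \<in> F} \<union> {(t e, s e) | e. e \<in> F}"

definition components :: "nat set \<Rightarrow> 'e set \<Rightarrow> ('e \<Rightarrow> nat) \<Rightarrow> ('e \<Rightarrow> nat) \<Rightarrow> nat set set" where
  "components N F s t = {(adj F s t)\<^sup>* `` {x} | x. x \<in> N}"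

definition spanning_forest :: "'e set \<Rightarrow> ('e \<Rightarrow> nat) \<Rightarrow> ('e \<Rightarrow> nat) \<Rightarrow> 'e set \<Rightarrow> bool" where
  "spanning_forest E s t F \<longleftrightarrow> F \<subseteq> E \<and> undirected_acyclic F s t"

definition rooted_at :: "'e set \<Rightarrow> ('e \<Rightarrow> nat) \<Rightarrow> nat set \<Rightarrow> nat \<Rightarrow> bool" where
  "rooted_at F s C b \<longleftrightarrow> {v \<in> C. \<not> (\<exists>e\<in>F. s e = v)} = {b}"

definition Theta :: "nat \<Rightarrow> 'e set \<Rightarrow> ('e \<Rightarrow> nat) \<Rightarrow> ('e \<Rightarrow> nat) \<Rightarrow> nat set \<Rightarrow> 'e set set" where
  "Theta m E s t B = {F. spanning_forest E s t F \<and>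
      card (components {1..m+1} F s t) = card B \<and>
      (\<forall>C\<in>components {1..m+1} F s t. \<exists>b\<in>B. rooted_at F s C b)}"

definition Eminus :: "'e set \<Rightarrow> ('e \<Rightarrow> 'r::ordered_ring) \<Rightarrow> 'e set" where
  "Eminus E \<pi> = {e \<in> E. \<pi> e < 0}"

definition Eplus :: "'e set \<Rightarrow> ('e \<Rightarrow> 'r::ordered_ring) \<Rightarrow> 'e set" where
  "Eplus E \<pi> = {e \<in> E. \<pi> e > 0}"

definition edge_partition ::
  "nat \<Rightarrow> 'e set \<Rightarrow> ('e \<Rightarrow> nat) \<Rightarrow> ('e \<Rightarrow> nat) \<Rightarrow> ('e \<Rightarrow> 'r::ordered_ring) \<Rightarrow> ('e \<Rightarrow> 'e set) \<Rightarrow> bool" where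
  "edge_partition m E s t \<pi> \<mu> \<longleftrightarrow> multidigraph m E s t \<and>
     E = Eplus E \<pi> \<union> Eminus E \<pi> \<and>
     (\<forall>es vs. is_cycle E s t es vs \<longrightarrow> card (set es \<inter> Eminus E \<pi>) \<le> 1) \<and>
     (\<forall>e\<in>Eminus E \<pi>. \<mu> e \<subseteq> Eplus E \<pi> \<and>
        (\<forall>e'\<in>\<mu> e. s e' = s e) \<and>
        (\<forall>e'\<in>\<mu> e. \<forall>es vs. is_cycle E s t es vs \<and> e' \<in> set es \<longrightarrow> t e \<in> set vs) \<and>
        (\<forall>e''\<in>Eminus E \<pi>. e'' \<noteq> e \<longrightarrow> \<mu> e \<inter> \<mu> e'' = {}))"

definition im_mu :: "'e set \<Rightarrow> ('e \<Rightarrow> 'r::ordered_ring) \<Rightarrow> ('e \<Rightarrow> 'e set) \<Rightarrow> 'e set" where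
  "im_mu E \<pi> \<mu> = (\<Union>e\<in>Eminus E \<pi>. \<mu> e)"

definition mu_star :: "'e set \<Rightarrow> ('e \<Rightarrow> 'r::ordered_ring) \<Rightarrow> ('e \<Rightarrow> 'e set) \<Rightarrow> 'e \<Rightarrow> 'e" where
  "mu_star E \<pi> \<mu> e' = (THE e. e \<in> Eminus E \<pi> \<and> e' \<in> \<mu> e)"

definition E_zeta ::
  "nat \<Rightarrow> 'e set \<Rightarrow> ('e \<Rightarrow> nat) \<Rightarrow> ('e \<Rightarrow> nat) \<Rightarrow> ('e \<Rightarrow> 'r::ordered_ring) \<Rightarrow> ('e \<Rightarrow> 'e set) \<Rightarrow> nat set \<Rightarrow> 'e set \<Rightarrow> 'e set set" where
  "E_zeta m E s t \<pi> \<mu> B \<zeta> = {D. D \<subseteq> \<zeta> \<inter> im_mu E \<pi> \<mu> \<and>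
      (\<zeta> - D) \<union> mu_star E \<pi> \<mu> ` D \<in> Theta m E s t B}"

end

theory Submission
  imports Defs
begin


fun gpath :: "(nat \<Rightarrow> 'e \<Rightarrow> nat \<Rightarrow> bool) \<Rightarrow> nat list \<Rightarrow> 'e list \<Rightarrow> bool" where
  "gpath P [v] [] = True"
| "gpath P (u # v # vs) (e # es) = (P u e v \<and> gpath P (v # vs) es)"
| "gpath P _ _ = False"

definition rel :: "(nat \<Rightarrow> 'e \<Rightarrow> nat \<Rightarrow> bool) \<Rightarrow> (nat \<times> nat) set" where
  "rel P = {(u, v). \<exists>e. P u e v}"

definition Pd :: "'e set \<Rightarrow> ('e \<Rightarrow> nat) \<Rightarrow> ('e \<Rightarrow> nat) \<Rightarrow> nat \<Rightarrow> 'e \<Rightarrow> nat \<Rightarrow> bool" where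
  "Pd F s t u e v \<longleftrightarrow> e \<in> F \<and> s e = u \<and> t e = v"

definition Pu :: "'e set \<Rightarrow> ('e \<Rightarrow> nat) \<Rightarrow> ('e \<Rightarrow> nat) \<Rightarrow> nat \<Rightarrow> 'e \<Rightarrow> nat \<Rightarrow> bool" where
  "Pu F s t u e v \<longleftrightarrow> e \<in> F \<and> (s e = u \<and> t e = v \<or> t e = u \<and> s e = v)"

lemma gpath_ne: "gpath P vs es \<Longrightarrow> vs \<noteq> []"
  by (induction P vs es rule: gpath.induct) auto

lemma gpath_suffix: "gpath P (a @ c) es \<Longrightarrow> c \<noteq> [] \<Longrightarrow> gpath P c (drop (length a) es)"
proof (induction a arbitrary: es)
  case Nil then show ?case by simp
next
  case (Cons x a)
  then obtain y c' where "a @ c = y # c'" by (cases "a @ c") auto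
  with Cons.prems obtain e es' where "es = e # es'" "gpath P (a @ c) es'"
    by (cases es) auto
  with Cons show ?case by simp
qed

lemma gpath_nth: "gpath P vs es \<Longrightarrow> length vs = Suc (length es) \<and> (\<forall>i<length es. P (vs!i) (es!i) (vs!Suc i))"
proof (induction P vs es rule: gpath.induct)
  case (2 P u v vs e es)
  then show ?case by (auto simp: nth_Cons split: nat.splits)
qed auto

lemma extract_path:
  assumes "(x, y) \<in> (rel P)\<^sup>*"
  shows "\<exists>vs es. gpath P vs es \<and> hd vs = x \<and> last vs = y \<and> distinct vs"
  using assms
proof (induction rule: converse_rtrancl_induct)
  case base
  show ?case by (rule exI[of _ "[y]"], rule exI[of _ "[]"]) simp
next
  case (step x z)
  then obtain vs es where p: "gpath P vs es" "hd vs = z" "last vs = y" "distinct vs" by blast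
  from step(1) obtain e where e: "P x e z" by (auto simp: rel_def)
  show ?case
  proof (cases "x \<in> set vs")
    case True
    then obtain a b where ab: "vs = a @ x # b" by (meson split_list)
    have "gpath P (x # b) (drop (length a) es)" using gpath_suffix p(1) ab by fastforce
    moreover have "last (x # b) = y" using p(3) ab by simp
    moreover have "distinct (x # b)" using p(4) ab by simp
    ultimately show ?thesis by (metis list.sel(1))
  next
    case False
    from gpath_ne[OF p(1)] p(2) obtain vs' where vs': "vs = z # vs'" by (cases vs) auto
    have "gpath P (x # vs) (e # es)" using vs' e p(1) by simp
    moreover have "last (x # vs) = y" using p(3) vs' by simp
    moreover have "distinct (x # vs)" using p(4) False by simp
    ultimately show ?thesis by (metis list.sel(1))
  qed
qed

lemma gpath_Pu_endpoints: "gpath (Pu F s t) vs es \<Longrightarrow> e \<in> set es \<Longrightarrow> s e \<in> set vs \<and> t e \<in> set vs"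
  by (induction "Pu F s t" vs es rule: gpath.induct) (auto simp: Pu_def)

lemma gpath_Pu_distinct: "gpath (Pu F s t) vs es \<Longrightarrow> distinct vs \<Longrightarrow> distinct es"
proof (induction "Pu F s t" vs es rule: gpath.induct)
  case (2 u v vs e es)
  then have d: "distinct es" by simp
  have "e \<notin> set es"
  proof
    assume "e \<in> set es"
    with gpath_Pu_endpoints 2(2) have "s e \<in> set (v # vs) \<and> t e \<in> set (v # vs)" by fastforce
    moreover have "s e = u \<or> t e = u" using 2(2) by (auto simp: Pu_def)
    ultimately show False using 2(3) by auto
  qed
  with d show ?case by simp
qed auto

lemma gpath_mono: "gpath P vs es \<Longrightarrow> (\<And>u e v. P u e v \<Longrightarrow> Q u e v) \<Longrightarrow> gpath Q vs es"
  by (induction P vs es rule: gpath.induct) auto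


lemma gpath_Pu_set: "gpath (Pu G s t) vs es \<Longrightarrow> set es \<subseteq> G"
  by (induction "Pu G s t" vs es rule: gpath.induct) (auto simp: Pu_def)

lemma close_cycle:
  assumes p: "gpath (Pu G s t) vs es" and d: "distinct vs" and GF: "G \<subseteq> F"
    and e: "e \<in> F" "e \<notin> G"
    and conn: "(s e = last vs \<and> t e = hd vs) \<or> (t e = last vs \<and> s e = hd vs)"
  shows "undirected_cycle F s t (es @ [e]) (vs @ [hd vs])"
proof -
  from gpath_nth[OF p] have len: "length vs = Suc (length es)"
    and nth: "\<forall>i<length es. Pu G s t (vs!i) (es!i) (vs!Suc i)" by auto
  obtain x ys where vs: "vs = x # ys" using gpath_ne[OF p] by (cases vs) auto
  have lastv: "vs ! length es = last vs" using len gpath_ne[OF p] by (simp add: last_conv_nth)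
  have sG: "set es \<subseteq> G" using gpath_Pu_set[OF p] .
  have de: "distinct (es @ [e])" using gpath_Pu_distinct[OF p d] sG e by auto
  have idx: "\<forall>i<length (es @ [e]). (s ((es @ [e])!i) = (vs @ [hd vs])!i \<and> t ((es @ [e])!i) = (vs @ [hd vs])!Suc i) \<or>
      (t ((es @ [e])!i) = (vs @ [hd vs])!i \<and> s ((es @ [e])!i) = (vs @ [hd vs])!Suc i)"
  proof (intro allI impI)
    fix i assume i: "i < length (es @ [e])"
    show "(s ((es @ [e])!i) = (vs @ [hd vs])!i \<and> t ((es @ [e])!i) = (vs @ [hd vs])!Suc i) \<or>
      (t ((es @ [e])!i) = (vs @ [hd vs])!i \<and> s ((es @ [e])!i) = (vs @ [hd vs])!Suc i)"
    proof (cases "i < length es")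
      case True
      then have "Pu G s t (vs!i) (es!i) (vs!Suc i)" using nth by blast
      then show ?thesis using True len by (auto simp: nth_append Pu_def)
    next
      case False
      then have "i = length es" using i by simp
      then show ?thesis using len conn lastv by (auto simp: nth_append)
    qed
  qed
  show ?thesis unfolding undirected_cycle_def
    using len de idx sG GF e d vs by (auto simp: nth_append)
qed

lemma dcycle_ucycle:
  assumes c: "is_cycle F s t es vs"
  shows "undirected_cycle F s t es vs"
proof -
  from c have ne: "es \<noteq> []" and len: "length vs = Suc (length es)" and sub: "set es \<subseteq> F"
    and nth: "\<forall>i<length es. s (es!i) = vs!i \<and> t (es!i) = vs!Suc i"
    and cl: "vs!0 = vs!length es" and d: "distinct (tl vs)"
    by (auto simp: is_cycle_def)
  let ?k = "length es"
  define g where "g i = (if i = 0 then ?k - 1 else i - 1)" for i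
  have vg: "vs ! i = tl vs ! g i" if "i < ?k" for i
    using that ne len cl by (cases vs) (auto simp: g_def nth_Cons split: nat.splits)
  have "distinct es"
  proof (subst distinct_conv_nth, intro allI impI)
    fix i j assume ij: "i < ?k" "j < ?k" "i \<noteq> j"
    show "es ! i \<noteq> es ! j"
    proof
      assume "es ! i = es ! j"
      then have "vs ! i = vs ! j" using nth ij by metis
      then have "tl vs ! g i = tl vs ! g j" using vg ij by simp
      moreover have "g i < length (tl vs)" "g j < length (tl vs)" using ij len ne
        by (auto simp: g_def)
      ultimately have "g i = g j" using d by (simp add: nth_eq_iff_index_eq)
      then show False using ij by (auto simp: g_def split: if_splits)
    qed
  qed
  then show ?thesis using ne len sub nth cl d by (auto simp: undirected_cycle_def)
qed

lemma cycle_from_trancl: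
  assumes "(v, v) \<in> (rel (Pd F s t))\<^sup>+"
  shows "\<exists>es vs. is_cycle F s t es vs"
proof -
  from tranclD[OF assms] obtain w where vw: "(v, w) \<in> rel (Pd F s t)" and wv: "(w, v) \<in> (rel (Pd F s t))\<^sup>*"
    by blast
  from vw obtain e where e: "e \<in> F" "s e = v" "t e = w" by (auto simp: rel_def Pd_def)
  from extract_path[OF wv] obtain vs es where p: "gpath (Pd F s t) vs es" "hd vs = w" "last vs = v" "distinct vs"
    by blast
  from gpath_nth[OF p(1)] have len: "length vs = Suc (length es)"
    and nth: "\<forall>i<length es. Pd F s t (vs!i) (es!i) (vs!Suc i)" by auto
  obtain x ys where vs: "vs = x # ys" using gpath_ne[OF p(1)] by (cases vs) auto
  have "is_cycle F s t (e # es) (v # vs)"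
    unfolding is_cycle_def
  proof (intro conjI)
    show "set (e # es) \<subseteq> F" using e nth by (auto simp: in_set_conv_nth Pd_def)
    show "\<forall>i<length (e # es). s ((e # es) ! i) = (v # vs) ! i \<and> t ((e # es) ! i) = (v # vs) ! Suc i"
    proof (intro allI impI)
      fix i assume "i < length (e # es)"
      then show "s ((e # es) ! i) = (v # vs) ! i \<and> t ((e # es) ! i) = (v # vs) ! Suc i"
        using e nth p(2) vs by (cases i) (auto simp: Pd_def)
    qed
    have lv: "last vs = vs ! (length vs - 1)" by (rule last_conv_nth) (simp add: vs)
    show "(v # vs) ! 0 = (v # vs) ! length (e # es)" using p(3) len lv by simp
  qed (use len p(4) in auto)
  then show ?thesis by blast
qed


lemma rel_Pd_eq: "rel (Pd F s t) = (\<lambda>e. (s e, t e)) ` F"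
  by (auto simp: rel_def Pd_def)

lemma adj_eq: "adj F s t = rel (Pu F s t)"
  by (auto simp: adj_def rel_def Pu_def)

lemma Pd_sub_adj: "rel (Pd F s t) \<subseteq> adj F s t"
  by (auto simp: adj_def rel_def Pd_def)

lemma sym_adj: "sym (adj F s t)"
  by (auto simp: adj_def sym_def)

lemma adj_class: "(x, y) \<in> (adj F s t)\<^sup>* \<Longrightarrow> (adj F s t)\<^sup>* `` {x} = (adj F s t)\<^sup>* `` {y}"
proof -
  assume xy: "(x, y) \<in> (adj F s t)\<^sup>*"
  have sy: "sym ((adj F s t)\<^sup>*)" by (rule sym_rtrancl[OF sym_adj])
  then have "(y, x) \<in> (adj F s t)\<^sup>*" using xy by (meson symD)
  then show ?thesis using xy by (auto intro: rtrancl_trans)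
qed

definition hr :: "'e set \<Rightarrow> ('e \<Rightarrow> nat) \<Rightarrow> ('e \<Rightarrow> nat) \<Rightarrow> nat \<Rightarrow> nat" where
  "hr F s t v = card ((rel (Pd F s t))\<^sup>+ `` {v})"

lemma acyc:
  assumes NC: "\<forall>es vs. \<not> is_cycle F s t es vs"
  shows "(v, v) \<notin> (rel (Pd F s t))\<^sup>+"
  using cycle_from_trancl NC by blast

lemma rank_dec:
  assumes fin: "finite F" and NC: "\<forall>es vs. \<not> is_cycle F s t es vs" and e: "e \<in> F"
  shows "hr F s t (t e) < hr F s t (s e)"
proof -
  let ?R = "rel (Pd F s t)"
  have fR: "finite (?R\<^sup>+)" using fin by (simp add: rel_Pd_eq)
  have st: "(s e, t e) \<in> ?R" using e by (auto simp: rel_def Pd_def)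
  have sub: "?R\<^sup>+ `` {t e} \<subseteq> ?R\<^sup>+ `` {s e}" using st by (auto intro: trancl_into_trancl2)
  have "t e \<in> ?R\<^sup>+ `` {s e}" using st by auto
  moreover have "t e \<notin> ?R\<^sup>+ `` {t e}" using acyc[OF NC] by auto
  ultimately have "?R\<^sup>+ `` {t e} \<subset> ?R\<^sup>+ `` {s e}" using sub by blast
  then show ?thesis unfolding hr_def by (rule psubset_card_mono[OF finite_Image[OF fR]])
qed

lemma reach_B:
  assumes fin: "finite F" and NC: "\<forall>es vs. \<not> is_cycle F s t es vs"
    and tN: "\<forall>e\<in>F. t e \<in> N" and out: "\<forall>v\<in>N - B. \<exists>e\<in>F. s e = v"
  shows "v \<in> N \<Longrightarrow> \<exists>b\<in>B. (v, b) \<in> (rel (Pd F s t))\<^sup>*"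
proof (induction "hr F s t v" arbitrary: v rule: less_induct)
  case less
  show ?case
  proof (cases "v \<in> B")
    case True then show ?thesis by blast
  next
    case False
    with less.prems out obtain e where e: "e \<in> F" "s e = v" by blast
    have "hr F s t (t e) < hr F s t v" using rank_dec[OF fin NC e(1)] e by simp
    then obtain b where "b \<in> B" "(t e, b) \<in> (rel (Pd F s t))\<^sup>*" using less.hyps tN e by blast
    moreover have "(v, t e) \<in> rel (Pd F s t)" using e by (auto simp: rel_def Pd_def)
    ultimately show ?thesis by (meson converse_rtrancl_into_rtrancl)
  qed
qed


lemma Theta_intro:
  assumes mg: "multidigraph m E s t" and BN: "B \<subseteq> {1..m+1}" and FE: "F \<subseteq> E"
    and i: "\<forall>v\<in>B. \<not> (\<exists>e\<in>F. s e = v)"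
    and ii: "\<forall>v\<in>{1..m+1} - B. \<exists>e\<in>F. s e = v"
    and iii: "\<forall>e1\<in>F. \<forall>e2\<in>F. s e1 = s e2 \<longrightarrow> e1 = e2"
    and NC: "\<forall>es vs. \<not> is_cycle F s t es vs"
  shows "F \<in> Theta m E s t B"
proof -
  let ?N = "{1..m+1::nat}"
  let ?R = "rel (Pd F s t)"
  let ?A = "adj F s t"
  have fin: "finite F" using mg FE by (auto simp: multidigraph_def intro: finite_subset)
  have eN: "\<forall>e\<in>F. s e \<in> ?N \<and> t e \<in> ?N \<and> s e \<noteq> t e" using mg FE by (auto simp: multidigraph_def)
  have ua: "undirected_acyclic F s t"
    unfolding undirected_acyclic_def
  proof (intro notI, elim exE)
    fix es vs assume uc: "undirected_cycle F s t es vs"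
    let ?k = "length es"
    let ?h = "hr F s t"
    from uc have ne: "es \<noteq> []" and len: "length vs = Suc ?k" and sub: "set es \<subseteq> F"
      and de: "distinct es"
      and con: "\<forall>i<?k. (s (es!i) = vs!i \<and> t (es!i) = vs!Suc i) \<or> (t (es!i) = vs!i \<and> s (es!i) = vs!Suc i)"
      and cl: "vs!0 = vs!?k"
      by (auto simp: undirected_cycle_def)
    have esF: "i < ?k \<Longrightarrow> es ! i \<in> F" for i using sub by auto
    define M where "M = Max ((\<lambda>i. ?h (vs!i)) ` {..<?k})"
    have kpos: "0 < ?k" using ne by simp
    have "M \<in> (\<lambda>i. ?h (vs!i)) ` {..<?k}" unfolding M_def by (rule Max_in) (use kpos in auto)
    then obtain j where j: "j < ?k" "?h (vs!j) = M" by auto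
    have leM0: "?h (vs!i) \<le> M" if "i < ?k" for i unfolding M_def by (rule Max_ge) (use that in auto)
    have leM: "?h (vs!i) \<le> M" if "i \<le> ?k" for i
    proof (cases "i < ?k")
      case True then show ?thesis by (rule leM0)
    next
      case False then have "i = ?k" using that by simp
      then show ?thesis using cl leM0[OF kpos] by simp
    qed
    have sj: "s (es!j) = vs!j"
    proof (rule ccontr)
      assume "s (es!j) \<noteq> vs!j"
      moreover have "(s (es!j) = vs!j \<and> t (es!j) = vs!Suc j) \<or> (t (es!j) = vs!j \<and> s (es!j) = vs!Suc j)" using con j(1) by blast
      ultimately have "t (es!j) = vs!j" "s (es!j) = vs!Suc j" by blast+
      then have "?h (vs!j) < ?h (vs!Suc j)" using rank_dec[OF fin NC esF[OF j(1)]] by simp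
      moreover have "?h (vs!Suc j) \<le> M" using leM j(1) by simp
      ultimately show False using j(2) by simp
    qed
    define j' where "j' = (if j = 0 then ?k - 1 else j - 1)"
    have j'k: "j' < ?k" using j(1) kpos by (auto simp: j'_def)
    have vj': "vs ! Suc j' = vs ! j" using cl kpos by (auto simp: j'_def)
    have sj': "s (es!j') = vs!j"
    proof (rule ccontr)
      assume "s (es!j') \<noteq> vs!j"
      moreover have "(s (es!j') = vs!j' \<and> t (es!j') = vs!Suc j') \<or> (t (es!j') = vs!j' \<and> s (es!j') = vs!Suc j')" using con j'k by blast
      ultimately have "s (es!j') = vs!j'" "t (es!j') = vs!j" using vj' by auto
      then have "?h (vs!j) < ?h (vs!j')" using rank_dec[OF fin NC esF[OF j'k]] by simp
      moreover have "?h (vs!j') \<le> M" using leM j'k by simp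
      ultimately show False using j(2) by simp
    qed
    have "es ! j = es ! j'" using iii esF[OF j(1)] esF[OF j'k] sj sj' by metis
    then have "j = j'" using de j(1) j'k by (simp add: nth_eq_iff_index_eq)
    then have j0: "j = 0" unfolding j'_def by (cases "j = 0") simp_all
    have "j' = ?k - 1" using j0 by (simp add: j'_def)
    then have "?k - 1 = 0" using \<open>j = j'\<close> j0 by simp
    then have k1: "?k = 1" "j = 0" using kpos j0 by linarith+
    then have "vs ! 1 = vs ! 0" using cl by simp
    moreover have "(s (es!0) = vs!0 \<and> t (es!0) = vs!Suc 0) \<or> (t (es!0) = vs!0 \<and> s (es!0) = vs!Suc 0)" using con kpos by blast
    ultimately have "s (es!0) = t (es!0)" by auto
    then show False using eN esF[OF kpos] by blast
  qed
  have sv: "single_valued ?R"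
    using iii by (auto simp: single_valued_def rel_def Pd_def)
  have noB: "b \<in> B \<Longrightarrow> (b, z) \<notin> ?R" for b z using i by (auto simp: rel_def Pd_def)
  have uniq: "b1 = b2" if "b1 \<in> B" "b2 \<in> B" "(v, b1) \<in> ?R\<^sup>*" "(v, b2) \<in> ?R\<^sup>*" for v b1 b2
  proof -
    from single_valued_confluent[OF sv that(3,4)]
    show ?thesis
      by (metis converse_rtranclE noB that(1,2))
  qed
  have ex: "v \<in> ?N \<Longrightarrow> \<exists>b\<in>B. (v, b) \<in> ?R\<^sup>*" for v
    by (rule reach_B[OF fin NC]) (use eN ii in auto)
  define r where "r v = (THE b. b \<in> B \<and> (v, b) \<in> ?R\<^sup>*)" for v
  have rprop: "r v \<in> B \<and> (v, r v) \<in> ?R\<^sup>*" if "v \<in> ?N" for v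
  proof -
    from ex[OF that] obtain b where "b \<in> B" "(v, b) \<in> ?R\<^sup>*" by blast
    then have "\<exists>!b. b \<in> B \<and> (v, b) \<in> ?R\<^sup>*" using uniq by blast
    then show ?thesis unfolding r_def by (rule theI')
  qed
  have rB: "r b = b" if "b \<in> B" for b
    using rprop[of b] that BN uniq[of b "r b" b] by auto
  have rstep: "w \<in> ?N \<and> r u = r w" if "(u, w) \<in> ?A" "u \<in> ?N" for u w
  proof -
    from that(1) obtain e where e: "e \<in> F" "(s e = u \<and> t e = w) \<or> (t e = u \<and> s e = w)"
      by (auto simp: adj_def)
    have wN: "w \<in> ?N" using e eN by auto
    have eR: "(s e, t e) \<in> ?R" using e by (auto simp: rel_def Pd_def)
    have "r u = r w"
    proof (cases "s e = u \<and> t e = w")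
      case True
      then have "(u, r w) \<in> ?R\<^sup>*" using rprop[OF wN] eR by (meson converse_rtrancl_into_rtrancl)
      then show ?thesis using uniq rprop[OF that(2)] rprop[OF wN] by blast
    next
      case False
      then have "t e = u" "s e = w" using e by auto
      then have "(w, r u) \<in> ?R\<^sup>*" using rprop[OF that(2)] eR by (meson converse_rtrancl_into_rtrancl)
      then show ?thesis using uniq rprop[OF that(2)] rprop[OF wN] by blast
    qed
    with wN show ?thesis by blast
  qed
  have rstar: "w \<in> ?N \<and> r u = r w" if "(u, w) \<in> ?A\<^sup>*" "u \<in> ?N" for u w
    using that(1)
  proof (induction rule: rtrancl_induct)
    case base then show ?case using that(2) by simp
  next
    case (step y z) then show ?case using rstep by metis
  qed
  have RA: "?R\<^sup>* \<subseteq> ?A\<^sup>*" by (rule rtrancl_mono[OF Pd_sub_adj])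
  have comps: "components ?N F s t = (\<lambda>b. ?A\<^sup>* `` {b}) ` B"
  proof
    show "components ?N F s t \<subseteq> (\<lambda>b. ?A\<^sup>* `` {b}) ` B"
    proof
      fix C assume "C \<in> components ?N F s t"
      then obtain x where x: "x \<in> ?N" "C = ?A\<^sup>* `` {x}" by (auto simp: components_def)
      have "(x, r x) \<in> ?A\<^sup>*" using rprop[OF x(1)] RA by blast
      then have "C = ?A\<^sup>* `` {r x}" using x(2) adj_class by metis
      then show "C \<in> (\<lambda>b. ?A\<^sup>* `` {b}) ` B" using rprop[OF x(1)] by blast
    qed
    show "(\<lambda>b. ?A\<^sup>* `` {b}) ` B \<subseteq> components ?N F s t"
      using BN unfolding components_def by blast
  qed
  have inj: "inj_on (\<lambda>b. ?A\<^sup>* `` {b}) B"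
  proof (rule inj_onI)
    fix b1 b2 assume b: "b1 \<in> B" "b2 \<in> B" "?A\<^sup>* `` {b1} = ?A\<^sup>* `` {b2}"
    then have "(b1, b2) \<in> ?A\<^sup>*" by auto
    then have "r b1 = r b2" using rstar b BN by blast
    then show "b1 = b2" using rB b by simp
  qed
  have card: "card (components ?N F s t) = card B"
    using comps inj by (simp add: card_image)
  have rooted: "\<forall>C\<in>components ?N F s t. \<exists>b\<in>B. rooted_at F s C b"
  proof
    fix C assume "C \<in> components ?N F s t"
    then obtain x where x: "x \<in> ?N" "C = ?A\<^sup>* `` {x}" by (auto simp: components_def)
    have "{v \<in> C. \<not> (\<exists>e\<in>F. s e = v)} = {r x}"
    proof
      show "{v \<in> C. \<not> (\<exists>e\<in>F. s e = v)} \<subseteq> {r x}"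
      proof
        fix v assume v: "v \<in> {v \<in> C. \<not> (\<exists>e\<in>F. s e = v)}"
        then have xv: "(x, v) \<in> ?A\<^sup>*" using x by auto
        then have vN: "v \<in> ?N" and rv: "r x = r v" using rstar x(1) by auto
        have "v \<in> B" using v vN ii by blast
        then show "v \<in> {r x}" using rB rv by simp
      qed
      show "{r x} \<subseteq> {v \<in> C. \<not> (\<exists>e\<in>F. s e = v)}"
        using rprop[OF x(1)] RA x(2) i by auto
    qed
    then show "\<exists>b\<in>B. rooted_at F s C b" using rprop[OF x(1)] by (auto simp: rooted_at_def)
  qed
  show ?thesis unfolding Theta_def spanning_forest_def using FE ua card rooted by blast
qed


lemma avoid:
  assumes "(x, y) \<in> (rel (Pd F s t))\<^sup>*" "(x, v) \<notin> (rel (Pd F s t))\<^sup>*"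
  shows "(x, y) \<in> (rel (Pd {e \<in> F. s e \<noteq> v} s t))\<^sup>*"
  using assms(1)
proof (induction rule: rtrancl_induct)
  case base then show ?case by simp
next
  case (step y z)
  have "y \<noteq> v" using step(1) assms(2) by auto
  then have "(y, z) \<in> rel (Pd {e \<in> F. s e \<noteq> v} s t)" using step(2) by (auto simp: rel_def Pd_def)
  with step(3) show ?case by (rule rtrancl_into_rtrancl)
qed

lemma Theta_props:
  assumes mg: "multidigraph m E s t" and BN: "B \<subseteq> {1..m+1}" and FT: "F \<in> Theta m E s t B"
  shows "F \<subseteq> E"
    and "\<forall>v\<in>B. \<not> (\<exists>e\<in>F. s e = v)"
    and "\<forall>v\<in>{1..m+1} - B. \<exists>e\<in>F. s e = v"
    and "\<forall>e1\<in>F. \<forall>e2\<in>F. s e1 = s e2 \<longrightarrow> e1 = e2"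
    and "\<forall>es vs. \<not> is_cycle F s t es vs"
proof -
  let ?N = "{1..m+1::nat}"
  let ?R = "rel (Pd F s t)"
  let ?A = "adj F s t"
  let ?C = "components ?N F s t"
  from FT have FE: "F \<subseteq> E" and ua: "undirected_acyclic F s t" and card: "card ?C = card B"
    and rt: "\<forall>C\<in>?C. \<exists>b\<in>B. rooted_at F s C b"
    by (auto simp: Theta_def spanning_forest_def)
  show "F \<subseteq> E" by (rule FE)
  have fin: "finite F" using mg FE by (auto simp: multidigraph_def intro: finite_subset)
  have eN: "\<forall>e\<in>F. s e \<in> ?N \<and> t e \<in> ?N \<and> s e \<noteq> t e" using mg FE by (auto simp: multidigraph_def)
  show NC: "\<forall>es vs. \<not> is_cycle F s t es vs"
    using ua dcycle_ucycle by (fastforce simp: undirected_acyclic_def)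
  show ii: "\<forall>v\<in>?N - B. \<exists>e\<in>F. s e = v"
  proof
    fix v assume v: "v \<in> ?N - B"
    then have "?A\<^sup>* `` {v} \<in> ?C" by (auto simp: components_def)
    then obtain b where b: "b \<in> B" "rooted_at F s (?A\<^sup>* `` {v}) b" using rt by blast
    show "\<exists>e\<in>F. s e = v"
    proof (rule ccontr)
      assume "\<not> (\<exists>e\<in>F. s e = v)"
      then have "v \<in> {u \<in> ?A\<^sup>* `` {v}. \<not> (\<exists>e\<in>F. s e = u)}" by auto
      then have "v = b" using b(2) by (auto simp: rooted_at_def)
      then show False using v b(1) by simp
    qed
  qed
  show i: "\<forall>v\<in>B. \<not> (\<exists>e\<in>F. s e = v)"
  proof
    fix v assume vB: "v \<in> B"
    define g where "g C = (SOME b. b \<in> B \<and> rooted_at F s C b)" for C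
    have gp: "g C \<in> B \<and> rooted_at F s C (g C)" if "C \<in> ?C" for C
      unfolding g_def by (rule someI_ex) (use rt that in blast)
    have gC: "g C \<in> C \<and> \<not> (\<exists>e\<in>F. s e = g C)" if "C \<in> ?C" for C
    proof -
      have "g C \<in> {u \<in> C. \<not> (\<exists>e\<in>F. s e = u)}" using gp[OF that] by (auto simp: rooted_at_def)
      then show ?thesis by auto
    qed
    have inj: "inj_on g ?C"
    proof (rule inj_onI)
      fix C1 C2 assume C: "C1 \<in> ?C" "C2 \<in> ?C" "g C1 = g C2"
      from C(1) obtain x1 where x1: "C1 = ?A\<^sup>* `` {x1}" by (auto simp: components_def)
      from C(2) obtain x2 where x2: "C2 = ?A\<^sup>* `` {x2}" by (auto simp: components_def)
      have "(x1, g C1) \<in> ?A\<^sup>*" using gC[OF C(1)] x1 by auto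
      then have "C1 = ?A\<^sup>* `` {g C1}" using x1 adj_class by metis
      moreover have "(x2, g C2) \<in> ?A\<^sup>*" using gC[OF C(2)] x2 by auto
      then have "C2 = ?A\<^sup>* `` {g C2}" using x2 adj_class by metis
      ultimately show "C1 = C2" using C(3) by simp
    qed
    have finC: "finite ?C"
    proof -
      have "?C = (\<lambda>x. ?A\<^sup>* `` {x}) ` ?N" by (auto simp: components_def)
      then show ?thesis by simp
    qed
    have finB: "finite B" using BN finite_subset by blast
    have "card (g ` ?C) = card B" using card inj by (simp add: card_image)
    moreover have "g ` ?C \<subseteq> B" using gp by blast
    ultimately have "g ` ?C = B" using finB by (simp add: card_subset_eq)
    then obtain C where "C \<in> ?C" "v = g C" using vB by blast
    then show "\<not> (\<exists>e\<in>F. s e = v)" using gC by blast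
  qed
  show "\<forall>e1\<in>F. \<forall>e2\<in>F. s e1 = s e2 \<longrightarrow> e1 = e2"
  proof (intro ballI impI, rule ccontr)
    fix e1 e2 assume e: "e1 \<in> F" "e2 \<in> F" "s e1 = s e2" "e1 \<noteq> e2"
    define v where "v = s e1"
    let ?G1 = "{e \<in> F. s e \<noteq> v}"
    let ?G' = "F - {e1}"
    have R1: "(s e1, t e1) \<in> ?R" "(s e2, t e2) \<in> ?R" using e by (auto simp: rel_def Pd_def)
    have nr: "(t e, v) \<notin> ?R\<^sup>*" if "e \<in> F" "s e = v" for e
    proof
      assume "(t e, v) \<in> ?R\<^sup>*"
      moreover have "(v, t e) \<in> ?R" using that by (auto simp: rel_def Pd_def)
      ultimately have "(v, v) \<in> ?R\<^sup>+" by (meson rtrancl_into_trancl2)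
      then show False using acyc[OF NC] by blast
    qed
    have ex: "u \<in> ?N \<Longrightarrow> \<exists>b\<in>B. (u, b) \<in> ?R\<^sup>*" for u
      by (rule reach_B[OF fin NC]) (use eN ii in auto)
    obtain b1 where b1: "b1 \<in> B" "(t e1, b1) \<in> ?R\<^sup>*" using ex eN e(1) by blast
    obtain b2 where b2: "b2 \<in> B" "(t e2, b2) \<in> ?R\<^sup>*" using ex eN e(2) by blast
    have p1: "(t e1, b1) \<in> (rel (Pd ?G1 s t))\<^sup>*" using avoid[OF b1(2) nr[OF e(1)]] v_def by simp
    have p2: "(t e2, b2) \<in> (rel (Pd ?G1 s t))\<^sup>*" using avoid[OF b2(2) nr[OF e(2)]] v_def e(3) by simp
    have RA: "?R\<^sup>* \<subseteq> ?A\<^sup>*" by (rule rtrancl_mono[OF Pd_sub_adj])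
    have syA: "sym (?A\<^sup>*)" by (rule sym_rtrancl[OF sym_adj])
    have vN: "v \<in> ?N" using eN e(1) v_def by simp
    have "?A\<^sup>* `` {v} \<in> ?C" using vN by (auto simp: components_def)
    then obtain b where b: "b \<in> B" "rooted_at F s (?A\<^sup>* `` {v}) b" using rt by blast
    have inC: "(v, bb) \<in> ?A\<^sup>*" if "e \<in> F" "s e = v" "(t e, bb) \<in> ?R\<^sup>*" for e bb
    proof -
      have "(v, t e) \<in> ?R" using that by (auto simp: rel_def Pd_def)
      then have "(v, bb) \<in> ?R\<^sup>*" using that(3) by (meson converse_rtrancl_into_rtrancl)
      then show ?thesis using RA by blast
    qed
    have "b1 = b" using inC[OF e(1) v_def[symmetric] b1(2)] i b1(1) b(2) by (auto simp: rooted_at_def)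
    moreover have "b2 = b" using inC[OF e(2) _ b2(2)] e(3) v_def i b2(1) b(2) by (auto simp: rooted_at_def)
    ultimately have b12: "b1 = b2" by simp
    let ?A' = "adj ?G' s t"
    have G1A: "rel (Pd ?G1 s t) \<subseteq> ?A'" using e v_def by (auto simp: rel_def Pd_def adj_def)
    have q1: "(t e1, b1) \<in> ?A'\<^sup>*" using p1 rtrancl_mono[OF G1A] by blast
    have q2: "(t e2, b2) \<in> ?A'\<^sup>*" using p2 rtrancl_mono[OF G1A] by blast
    have q2': "(b2, t e2) \<in> ?A'\<^sup>*" using q2 sym_rtrancl[OF sym_adj] by (meson symD)
    have q3: "(t e2, v) \<in> ?A'" using e v_def by (auto simp: adj_def)
    have "(t e1, v) \<in> ?A'\<^sup>*" using q1 q2' q3 b12 by (meson rtrancl_trans rtrancl_into_rtrancl)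
    then have "(t e1, v) \<in> (rel (Pu ?G' s t))\<^sup>*" by (simp add: adj_eq)
    from extract_path[OF this] obtain vs es where
      p: "gpath (Pu ?G' s t) vs es" "hd vs = t e1" "last vs = v" "distinct vs" by blast
    have "undirected_cycle F s t (es @ [e1]) (vs @ [hd vs])"
      by (rule close_cycle[OF p(1) p(4)]) (use e(1) p(2,3) v_def in auto)
    then show False using ua by (auto simp: undirected_acyclic_def)
  qed
qed


lemma is_cycle_mono: "is_cycle F s t es vs \<Longrightarrow> set es \<subseteq> G \<Longrightarrow> is_cycle G s t es vs"
  by (auto simp: is_cycle_def)

theorem lemma3p3:
  fixes m :: nat and E :: "'e set" and s t :: "'e \<Rightarrow> nat"
    and \<pi> :: "'e \<Rightarrow> 'r::ordered_ring" and \<mu> :: "'e \<Rightarrow> 'e set"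
    and B :: "nat set" and \<zeta> E1 E2 :: "'e set"
  assumes "edge_partition m E s t \<pi> \<mu>"
    and "B \<subseteq> {1..m+1}"
    and "\<zeta> \<in> Theta m E s t B"
    and "E1 \<in> E_zeta m E s t \<pi> \<mu> B \<zeta>"
    and "E2 \<in> E_zeta m E s t \<pi> \<mu> B \<zeta>"
  shows "E1 \<union> E2 \<in> E_zeta m E s t \<pi> \<mu> B \<zeta>"
proof -
  note ep = assms(1) and BN = assms(2) and zT = assms(3)
  let ?Em = "Eminus E \<pi>"
  let ?Ep = "Eplus E \<pi>"
  let ?ms = "mu_star E \<pi> \<mu>"
  have mg: "multidigraph m E s t" using ep by (simp add: edge_partition_def)
  have cyc: "\<forall>es vs. is_cycle E s t es vs \<longrightarrow> card (set es \<inter> ?Em) \<le> 1"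
    using ep by (simp add: edge_partition_def)
  have mu: "\<forall>e\<in>?Em. \<mu> e \<subseteq> ?Ep \<and> (\<forall>e'\<in>\<mu> e. s e' = s e) \<and>
        (\<forall>e''\<in>?Em. e'' \<noteq> e \<longrightarrow> \<mu> e \<inter> \<mu> e'' = {})"
    using ep by (simp add: edge_partition_def)
  have msp: "?ms e' \<in> ?Em \<and> e' \<in> \<mu> (?ms e')" if "e' \<in> im_mu E \<pi> \<mu>" for e'
  proof -
    from that obtain e where e: "e \<in> ?Em" "e' \<in> \<mu> e" by (auto simp: im_mu_def)
    have "\<exists>!e. e \<in> ?Em \<and> e' \<in> \<mu> e"
    proof (rule ex1I[of _ e])
      show "e \<in> ?Em \<and> e' \<in> \<mu> e" using e by simp
      fix e'' assume "e'' \<in> ?Em \<and> e' \<in> \<mu> e''"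
      then show "e'' = e" using mu e by blast
    qed
    then show ?thesis unfolding mu_star_def by (rule theI')
  qed
  have mss: "s (?ms e') = s e'" if "e' \<in> im_mu E \<pi> \<mu>" for e'
    using msp[OF that] mu by metis
  have EmE: "?Em \<subseteq> E" by (auto simp: Eminus_def)
  have zprops: "\<zeta> \<subseteq> E" "\<forall>v\<in>B. \<not> (\<exists>e\<in>\<zeta>. s e = v)" "\<forall>v\<in>{1..m+1} - B. \<exists>e\<in>\<zeta>. s e = v"
    "\<forall>e1\<in>\<zeta>. \<forall>e2\<in>\<zeta>. s e1 = s e2 \<longrightarrow> e1 = e2"
    using Theta_props[OF mg BN zT] by blast+
  from assms(4) have E1s: "E1 \<subseteq> \<zeta> \<inter> im_mu E \<pi> \<mu>" and Z1: "(\<zeta> - E1) \<union> ?ms ` E1 \<in> Theta m E s t B"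
    by (auto simp: E_zeta_def)
  from assms(5) have E2s: "E2 \<subseteq> \<zeta> \<inter> im_mu E \<pi> \<mu>" and Z2: "(\<zeta> - E2) \<union> ?ms ` E2 \<in> Theta m E s t B"
    by (auto simp: E_zeta_def)
  have NC1: "\<forall>es vs. \<not> is_cycle ((\<zeta> - E1) \<union> ?ms ` E1) s t es vs"
    using Theta_props(5)[OF mg BN Z1] .
  have NC2: "\<forall>es vs. \<not> is_cycle ((\<zeta> - E2) \<union> ?ms ` E2) s t es vs"
    using Theta_props(5)[OF mg BN Z2] .
  define D where "D = E1 \<union> E2"
  have Ds: "D \<subseteq> \<zeta> \<inter> im_mu E \<pi> \<mu>" using E1s E2s D_def by blast
  define Z where "Z = (\<zeta> - D) \<union> ?ms ` D"
  define f where "f e = (if e \<in> D then ?ms e else e)" for e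
  have Zf: "Z = f ` \<zeta>" using Ds by (auto simp: Z_def f_def)
  have sf: "s (f e) = s e" if "e \<in> \<zeta>" for e using mss Ds that by (auto simp: f_def)
  have ZE: "Z \<subseteq> E"
  proof -
    have "?ms ` D \<subseteq> E" using msp Ds EmE by blast
    then show ?thesis using zprops(1) by (auto simp: Z_def)
  qed
  have "Z \<in> Theta m E s t B"
  proof (rule Theta_intro[OF mg BN ZE])
    show "\<forall>v\<in>B. \<not> (\<exists>e\<in>Z. s e = v)" using zprops(2) sf Zf by auto
    show "\<forall>v\<in>{1..m+1} - B. \<exists>e\<in>Z. s e = v"
    proof
      fix v assume "v \<in> {1..m+1} - B"
      then obtain a where "a \<in> \<zeta>" "s a = v" using zprops(3) by blast
      then show "\<exists>e\<in>Z. s e = v" using Zf sf by (intro bexI[of _ "f a"]) auto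
    qed
    show "\<forall>e1\<in>Z. \<forall>e2\<in>Z. s e1 = s e2 \<longrightarrow> e1 = e2"
      using zprops(4) sf Zf by auto
    show "\<forall>es vs. \<not> is_cycle Z s t es vs"
    proof (intro allI notI)
      fix es vs assume c: "is_cycle Z s t es vs"
      have cE: "is_cycle E s t es vs" using c ZE by (auto simp: is_cycle_def)
      have setZ: "set es \<subseteq> Z" using c by (simp add: is_cycle_def)
      have card1: "card (set es \<inter> ?Em) \<le> 1" using cyc cE by blast
      have "set es \<subseteq> (\<zeta> - E1) \<union> ?ms ` E1 \<or> set es \<subseteq> (\<zeta> - E2) \<union> ?ms ` E2"
      proof (rule ccontr)
        assume "\<not> ?thesis"
        then obtain x1 x2 where x1: "x1 \<in> set es" "x1 \<notin> (\<zeta> - E1) \<union> ?ms ` E1"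
          and x2: "x2 \<in> set es" "x2 \<notin> (\<zeta> - E2) \<union> ?ms ` E2" by blast
        from x1 setZ obtain a1 where a1: "a1 \<in> D" "a1 \<notin> E1" "x1 = ?ms a1"
          unfolding Z_def D_def by blast
        from x2 setZ obtain a2 where a2: "a2 \<in> D" "a2 \<in> E1" "x2 = ?ms a2"
          unfolding Z_def D_def by blast
        have m1: "x1 \<in> ?Em" using a1 msp Ds by blast
        have m2: "x2 \<in> ?Em" using a2 msp Ds by blast
        have "x2 \<in> (\<zeta> - E1) \<union> ?ms ` E1" using a2 by blast
        then have ne: "x1 \<noteq> x2" using x1 by blast
        have "{x1, x2} \<subseteq> set es \<inter> ?Em" using x1 x2 m1 m2 by blast
        then have "card {x1, x2} \<le> card (set es \<inter> ?Em)" by (intro card_mono) auto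
        then show False using ne card1 by simp
      qed
      then show False using NC1 NC2 c is_cycle_mono by metis
    qed
  qed
  then show ?thesis using Ds by (simp add: E_zeta_def D_def Z_def)
qed

end
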